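(* Let ${\bf F}^*_0(z)=\sum_n {\bf f}^*_0(n)z^n$, where ${\bf f}^*_0(n)$ is the total weight of secondary structures over $[n]$ containing the arc $(1,n)$, and let ${\bf F}_0(z)=\sum_n {\bf f}_0(n)z^n$, where ${\bf f}_0(n)$ is the total weight of all secondary structures over $[n]$ (including the empty structure for $n=0$). Then $$ {\bf F}^*_0(z)=\frac{6}{16}e^{0.5}z^2\frac{z}{1-z}+\frac{6}{16}e^{1}z^2\left(\frac{1}{1-z}\right)^2{\bf F}^*_0(z)+\frac{6}{16}e^{-5}z^2\frac{\left({\bf F}^*_0(z)\frac{1}{1-z}\right)^2}{1-{\bf F}^*_0(z)\frac{1}{1-z}}\frac{1}{1-z}, $$ ${\bf F}^*_0(z)$ is the unique formal power series with zero constant term satisfying this equation, and $$ {\bf F}_0(z)=\frac{1}{1-z}\cdot\frac{1}{1-{\bf F}^*_0(z)\frac{1}{1-z}}. $$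
   Context: A secondary structure over $[n]=\{1,\dots,n\}$ is a set of arcs $(i,j)$, $1\le i<j\le n$, each vertex in at most one arc, with no two arcs crossing (no $i<k<j<l$ with $(i,j),(k,l)$ both arcs) and no arc of the form $(i,i+1)$. For an arc $(i,j)$, the arcs directly nested in it are the arcs $(k,l)$ with $i<k<l<j$ not contained in any other arc $(k',l')$ with $i<k'<k<l<l'<j$. The loop closed by $(i,j)$ is a hairpin loop if $(i,j)$ has no directly nested arc, an interior loop (including stacks and bulges) if it has exactly one directly nested arc, and a multi-loop if it has at least two directly nested arcs. The weight of a secondary structure is $(6/16)^{\#\mathrm{arcs}}\cdot e^{0.5\,h}\cdot e^{1\cdot i}\cdot e^{-5\,m}$, where $h,i,m$ are the numbers of hairpin loops, interior loops and multi-loops, respectively, and $e$ is Euler's number. *)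

theory Defs
  imports "HOL-Computational_Algebra.Formal_Power_Series"
begin

definition sec_struct :: "nat \<Rightarrow> (nat \<times> nat) set \<Rightarrow> bool" where
  "sec_struct n S \<longleftrightarrow>
     S \<subseteq> {(i, j). 1 \<le> i \<and> i < j \<and> j \<le> n} \<and>
     (\<forall>(i, j)\<in>S. \<forall>(k, l)\<in>S. (i, j) \<noteq> (k, l) \<longrightarrow> {i, j} \<inter> {k, l} = {}) \<and>
     (\<forall>(i, j)\<in>S. \<forall>(k, l)\<in>S. \<not> (i < k \<and> k < j \<and> j < l)) \<and>
     (\<forall>(i, j)\<in>S. j \<noteq> i + 1)"

definition directly_nested :: "(nat \<times> nat) set \<Rightarrow> nat \<times> nat \<Rightarrow> (nat \<times> nat) set" where
  "directly_nested S a =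
     {(k, l) \<in> S. fst a < k \<and> k < l \<and> l < snd a \<and>
        \<not> (\<exists>(k', l')\<in>S. fst a < k' \<and> k' < k \<and> l < l' \<and> l' < snd a)}"

definition num_hairpin :: "(nat \<times> nat) set \<Rightarrow> nat" where
  "num_hairpin S = card {a \<in> S. card (directly_nested S a) = 0}"

definition num_interior :: "(nat \<times> nat) set \<Rightarrow> nat" where
  "num_interior S = card {a \<in> S. card (directly_nested S a) = 1}"

definition num_multi :: "(nat \<times> nat) set \<Rightarrow> nat" where
  "num_multi S = card {a \<in> S. card (directly_nested S a) \<ge> 2}"

definition ss_weight :: "(nat \<times> nat) set \<Rightarrow> real" where
  "ss_weight S = (6/16) ^ card S * exp (1/2 * real (num_hairpin S))
       * exp (1 * real (num_interior S)) * exp (-5 * real (num_multi S))"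

definition f0 :: "nat \<Rightarrow> real" where
  "f0 n = (\<Sum>S\<in>{S. sec_struct n S}. ss_weight S)"

definition f0_star :: "nat \<Rightarrow> real" where
  "f0_star n = (\<Sum>S\<in>{S. sec_struct n S \<and> (1, n) \<in> S}. ss_weight S)"

end

theory Submission
  imports Defs
begin


definition ok :: "(nat \<times> nat) set \<Rightarrow> bool" where
  "ok S \<longleftrightarrow> (\<forall>(i,j)\<in>S. i < j \<and> j \<noteq> i + 1) \<and>
     (\<forall>(i,j)\<in>S. \<forall>(k,l)\<in>S. (i,j) \<noteq> (k,l) \<longrightarrow> i \<noteq> k \<and> i \<noteq> l \<and> j \<noteq> k \<and> j \<noteq> l) \<and>
     (\<forall>(i,j)\<in>S. \<forall>(k,l)\<in>S. \<not> (i < k \<and> k < j \<and> j < l))"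

lemma sec_struct_ok: "sec_struct n S \<longleftrightarrow> ok S \<and> (\<forall>(i,j)\<in>S. 1 \<le> i \<and> j \<le> n)"
proof -
  have d: "\<And>i j k l::nat. ({i,j} \<inter> {k,l} = {}) \<longleftrightarrow> (i\<noteq>k \<and> i\<noteq>l \<and> j\<noteq>k \<and> j\<noteq>l)" by auto
  show ?thesis unfolding sec_struct_def ok_def d by (simp add: subset_iff) blast
qed

lemma okI:
  assumes "\<And>i j. (i,j)\<in>S \<Longrightarrow> i < j \<and> j \<noteq> i + 1"
    "\<And>i j k l. (i,j)\<in>S \<Longrightarrow> (k,l)\<in>S \<Longrightarrow> (i,j) \<noteq> (k,l) \<Longrightarrow> i \<noteq> k \<and> i \<noteq> l \<and> j \<noteq> k \<and> j \<noteq> l"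
    "\<And>i j k l. (i,j)\<in>S \<Longrightarrow> (k,l)\<in>S \<Longrightarrow> \<not> (i < k \<and> k < j \<and> j < l)"
  shows "ok S"
  using assms unfolding ok_def by blast

lemma okD1: "ok S \<Longrightarrow> (i,j)\<in>S \<Longrightarrow> i < j \<and> j \<noteq> i + 1"
  unfolding ok_def by blast
lemma okD2: "ok S \<Longrightarrow> (i,j)\<in>S \<Longrightarrow> (k,l)\<in>S \<Longrightarrow> (i,j) \<noteq> (k,l) \<Longrightarrow> i \<noteq> k \<and> i \<noteq> l \<and> j \<noteq> k \<and> j \<noteq> l"
  unfolding ok_def by blast
lemma okD3: "ok S \<Longrightarrow> (i,j)\<in>S \<Longrightarrow> (k,l)\<in>S \<Longrightarrow> \<not> (i < k \<and> k < j \<and> j < l)"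
  unfolding ok_def by blast

lemma ok_subset: "ok S \<Longrightarrow> T \<subseteq> S \<Longrightarrow> ok T"
  unfolding ok_def by blast

definition sh :: "nat \<Rightarrow> nat \<times> nat \<Rightarrow> nat \<times> nat" where
  "sh d = (\<lambda>(i,j). (i + d, j + d))"

lemma sh_simp[simp]: "sh d (i,j) = (i + d, j + d)" by (simp add: sh_def)

lemma inj_sh: "inj (sh d)" by (auto simp: inj_on_def sh_def)

lemma ok_sh: "ok (sh d ` S) \<longleftrightarrow> ok S"
  unfolding ok_def by (simp add: sh_def split_beta)

lemma ok_union: assumes a: "ok A" and b: "ok B" and s: "\<forall>x\<in>A. \<forall>y\<in>B. snd x < fst y" shows "ok (A \<union> B)"
proof (rule okI)
  have sep: "\<And>i j k l. (i,j)\<in>A \<Longrightarrow> (k,l)\<in>B \<Longrightarrow> j < k" using s by fastforce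
  fix i j k l
  show "(i,j)\<in>A \<union> B \<Longrightarrow> i < j \<and> j \<noteq> i + 1" using okD1[OF a] okD1[OF b] by blast
  show "(i,j)\<in>A \<union> B \<Longrightarrow> (k,l)\<in>A \<union> B \<Longrightarrow> (i,j) \<noteq> (k,l) \<Longrightarrow> i \<noteq> k \<and> i \<noteq> l \<and> j \<noteq> k \<and> j \<noteq> l"
    using okD2[OF a, of i j k l] okD2[OF b, of i j k l] okD1[OF a, of i j] okD1[OF b, of i j] okD1[OF a, of k l] okD1[OF b, of k l]
      sep[of i j k l] sep[of k l i j] by auto
  show "(i,j)\<in>A \<union> B \<Longrightarrow> (k,l)\<in>A \<union> B \<Longrightarrow> \<not> (i < k \<and> k < j \<and> j < l)"
    using okD3[OF a, of i j k l] okD3[OF b, of i j k l] okD1[OF a, of i j] okD1[OF b, of i j] okD1[OF a, of k l] okD1[OF b, of k l]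
      sep[of i j k l] sep[of k l i j] by auto
qed

lemma ok_insert_outer: "ok S \<Longrightarrow> (\<forall>(k,l)\<in>S. i < k \<and> l < j) \<Longrightarrow> i < j \<Longrightarrow> j \<noteq> i + 1
   \<Longrightarrow> ok (insert (i,j) S)"
proof (rule okI)
  assume a: "ok S" and s: "\<forall>(k,l)\<in>S. i < k \<and> l < j" and ij: "i < j" "j \<noteq> i + 1"
  have sep: "\<And>k l. (k,l)\<in>S \<Longrightarrow> i < k \<and> l < j" using s by fastforce
  fix p q k l
  show "(p,q)\<in>insert (i,j) S \<Longrightarrow> p < q \<and> q \<noteq> p + 1" using okD1[OF a] ij by blast
  show "(p,q)\<in>insert (i,j) S \<Longrightarrow> (k,l)\<in>insert (i,j) S \<Longrightarrow> (p,q) \<noteq> (k,l) \<Longrightarrow> p \<noteq> k \<and> p \<noteq> l \<and> q \<noteq> k \<and> q \<noteq> l"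
    using okD2[OF a, of p q k l] okD1[OF a, of p q] okD1[OF a, of k l] sep[of p q] sep[of k l] by auto
  show "(p,q)\<in>insert (i,j) S \<Longrightarrow> (k,l)\<in>insert (i,j) S \<Longrightarrow> \<not> (p < k \<and> k < q \<and> q < l)"
    using okD3[OF a, of p q k l] okD1[OF a, of p q] okD1[OF a, of k l] sep[of p q] sep[of k l] by auto
qed




definition top :: "(nat \<times> nat) set \<Rightarrow> (nat \<times> nat) set" where
  "top S = {(k,l)\<in>S. \<not> (\<exists>(k',l')\<in>S. k' < k \<and> l < l')}"

lemma dn_local: "A \<subseteq> S \<Longrightarrow> (\<forall>(k,l)\<in>S. fst a < k \<and> l < snd a \<longrightarrow> (k,l) \<in> A)
   \<Longrightarrow> directly_nested S a = directly_nested A a"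
  unfolding directly_nested_def by (cases a) (simp; blast)

lemma dn_sh: "directly_nested (sh d ` S) (sh d a) = sh d ` directly_nested S a"
proof (cases a)
  case (Pair p q)
  show ?thesis unfolding directly_nested_def Pair
    apply (rule set_eqI)
    apply (auto simp: image_iff)
     apply fastforce+
    done
qed

lemma top_sh: "top (sh d ` S) = sh d ` top S"
  unfolding top_def
    apply (rule set_eqI)
    apply (auto simp: image_iff)
     apply fastforce+
    done

lemma dn_outer: "(\<forall>(k,l)\<in>S. i < k \<and> k < l \<and> l < j) \<Longrightarrow> directly_nested (insert (i,j) S) (i,j) = top S"
  unfolding directly_nested_def top_def by (simp; blast)

lemma top_union: assumes a: "ok A" and b: "ok B" and s: "\<forall>x\<in>A. \<forall>y\<in>B. snd x < fst y"
  shows "top (A \<union> B) = top A \<union> top B"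
proof -
  have sep: "\<And>i j k l. (i,j)\<in>A \<Longrightarrow> (k,l)\<in>B \<Longrightarrow> j < k" using s by fastforce
  have la: "\<And>i j. (i,j)\<in>A \<Longrightarrow> i < j" using okD1[OF a] by blast
  have lb: "\<And>i j. (i,j)\<in>B \<Longrightarrow> i < j" using okD1[OF b] by blast
  show ?thesis
  proof (rule set_eqI, rule iffI)
    fix x assume "x \<in> top (A \<union> B)" then show "x \<in> top A \<union> top B" unfolding top_def by blast
  next
    fix x assume x: "x \<in> top A \<union> top B"
    obtain k l where kl: "x = (k,l)" by fastforce
    show "x \<in> top (A \<union> B)"
    proof (cases "x \<in> top A")
      case True
      have "\<not> (k' < k \<and> l < l')" if "(k',l') \<in> B" for k' l'
        using sep[of k l k' l'] la[of k l] True that kl unfolding top_def by auto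
      then show ?thesis using True kl unfolding top_def by blast
    next
      case False
      then have T: "x \<in> top B" using x by blast
      have "\<not> (k' < k \<and> l < l')" if "(k',l') \<in> A" for k' l'
        using sep[of k' l' k l] lb[of k l] T that kl unfolding top_def by auto
      then show ?thesis using T kl unfolding top_def by blast
    qed
  qed
qed


definition ec :: "nat \<Rightarrow> real" where
  "ec k = (if k = 0 then exp (1/2) else if k = 1 then exp 1 else exp (-5))"

definition lw :: "(nat \<times> nat) set \<Rightarrow> nat \<times> nat \<Rightarrow> real" where
  "lw S a = 6/16 * ec (card (directly_nested S a))"

lemma weight_prod: assumes fin: "finite S" shows "ss_weight S = (\<Prod>a\<in>S. lw S a)"
proof -
  define c where "c a = card (directly_nested S a)" for a
  define cc where "cc (k::nat) = (if k = 0 then 1/2 else if k = 1 then 1 else (-5::real))" for k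
  have e: "ec k = exp (cc k)" for k by (simp add: ec_def cc_def)
  have "(\<Prod>a\<in>S. lw S a) = (\<Prod>a\<in>S. 6/16 * exp (cc (c a)))" by (simp add: lw_def e c_def)
  also have "\<dots> = (6/16)^card S * (\<Prod>a\<in>S. exp (cc (c a)))" by (simp only: prod.distrib prod_constant)
  also have "(\<Prod>a\<in>S. exp (cc (c a))) = exp (\<Sum>a\<in>S. cc (c a))" by (simp add: exp_sum fin)
  also have "(\<Sum>a\<in>S. cc (c a)) = 1/2 * real (num_hairpin S) + 1 * real (num_interior S) + (-5) * real (num_multi S)"
  proof -
    have "(\<Sum>a\<in>S. cc (c a)) = (\<Sum>a\<in>S. (if c a = 0 then 1/2 else 0) + (if c a = 1 then 1 else 0) + (if 2 \<le> c a then -5 else 0))"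
      by (rule sum.cong) (auto simp: cc_def)
    also have "\<dots> = (\<Sum>a\<in>S. if c a = 0 then 1/2 else 0) + (\<Sum>a\<in>S. if c a = 1 then 1 else 0) + (\<Sum>a\<in>S. if 2 \<le> c a then -5 else 0)"
      by (simp add: sum.distrib)
    also have "(\<Sum>a\<in>S. if c a = 0 then 1/2 else 0) = (\<Sum>a\<in>{a\<in>S. c a = 0}. 1/2::real)"
      by (subst sum.inter_filter[OF fin]) simp
    also have "(\<Sum>a\<in>S. if c a = 1 then 1 else 0) = (\<Sum>a\<in>{a\<in>S. c a = 1}. 1::real)"
      by (subst sum.inter_filter[OF fin]) simp
    also have "(\<Sum>a\<in>S. if 2 \<le> c a then -5 else 0) = (\<Sum>a\<in>{a\<in>S. 2 \<le> c a}. -5::real)"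
      by (subst sum.inter_filter[OF fin]) simp
    finally show ?thesis by (simp add: num_hairpin_def num_interior_def num_multi_def c_def)
  qed
  finally show ?thesis by (simp add: ss_weight_def exp_add[symmetric] mult.assoc)
qed

lemma weight_union:
  assumes fa: "finite A" and fb: "finite B" and a: "ok A" and b: "ok B"
    and s: "\<forall>x\<in>A. \<forall>y\<in>B. snd x < fst y"
  shows "ss_weight (A \<union> B) = ss_weight A * ss_weight B"
proof -
  have sep: "\<And>i j k l. (i,j)\<in>A \<Longrightarrow> (k,l)\<in>B \<Longrightarrow> j < k" using s by fastforce
  have la: "\<And>i j. (i,j)\<in>A \<Longrightarrow> i < j" using okD1[OF a] by blast
  have lb: "\<And>i j. (i,j)\<in>B \<Longrightarrow> i < j" using okD1[OF b] by blast
  have disj: "A \<inter> B = {}" using sep la by fastforce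
  have dA: "directly_nested (A \<union> B) x = directly_nested A x" if "x \<in> A" for x
  proof (rule dn_local)
    obtain p q where x: "x = (p,q)" by fastforce
    show "\<forall>(k,l)\<in>A \<union> B. fst x < k \<and> l < snd x \<longrightarrow> (k,l) \<in> A"
      using sep[of p q] lb x that by fastforce
  qed auto
  have dB: "directly_nested (A \<union> B) x = directly_nested B x" if "x \<in> B" for x
  proof (rule dn_local)
    obtain p q where x: "x = (p,q)" by fastforce
    show "\<forall>(k,l)\<in>A \<union> B. fst x < k \<and> l < snd x \<longrightarrow> (k,l) \<in> B"
      using sep[of _ _ p q] la x that by fastforce
  qed auto
  have "ss_weight (A \<union> B) = (\<Prod>x\<in>A \<union> B. lw (A \<union> B) x)" using fa fb by (simp add: weight_prod)
  also have "\<dots> = (\<Prod>x\<in>A. lw (A \<union> B) x) * (\<Prod>x\<in>B. lw (A \<union> B) x)"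
    using fa fb disj by (simp add: prod.union_disjoint)
  also have "(\<Prod>x\<in>A. lw (A \<union> B) x) = (\<Prod>x\<in>A. lw A x)" by (rule prod.cong) (simp_all add: lw_def dA)
  also have "(\<Prod>x\<in>B. lw (A \<union> B) x) = (\<Prod>x\<in>B. lw B x)" by (rule prod.cong) (simp_all add: lw_def dB)
  finally show ?thesis using fa fb by (simp add: weight_prod)
qed

lemma weight_sh: assumes "finite S" shows "ss_weight (sh d ` S) = ss_weight S"
proof -
  have "ss_weight (sh d ` S) = (\<Prod>x\<in>sh d ` S. lw (sh d ` S) x)" using assms by (simp add: weight_prod)
  also have "\<dots> = (\<Prod>x\<in>S. lw (sh d ` S) (sh d x))" using prod.reindex[OF inj_on_subset[OF inj_sh subset_UNIV]] by (simp add: o_def)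
  also have "\<dots> = (\<Prod>x\<in>S. lw S x)"
    by (rule prod.cong) (simp_all add: lw_def dn_sh card_image inj_on_subset[OF inj_sh subset_UNIV])
  finally show ?thesis using assms by (simp add: weight_prod)
qed




lemma ssD: "sec_struct n S \<Longrightarrow> (i,j)\<in>S \<Longrightarrow> 1 \<le> i \<and> i < j \<and> j \<le> n"
  unfolding sec_struct_def by blast

lemma ss_ok: "sec_struct n S \<Longrightarrow> ok S" by (simp add: sec_struct_ok)

lemma ssI: "ok S \<Longrightarrow> (\<And>i j. (i,j)\<in>S \<Longrightarrow> 1 \<le> i \<and> j \<le> n) \<Longrightarrow> sec_struct n S"
  by (auto simp: sec_struct_ok)

lemma finite_SS: "finite {S. sec_struct n S}"
proof (rule finite_subset)
  show "{S. sec_struct n S} \<subseteq> Pow ({1..n} \<times> {1..n})"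
    using ssD by fastforce
qed simp

lemma finite_ss: "sec_struct n S \<Longrightarrow> finite S"
proof (rule finite_subset)
  assume "sec_struct n S"
  then show "S \<subseteq> {1..n} \<times> {1..n}" using ssD by fastforce
qed simp

definition unsh :: "nat \<Rightarrow> nat \<times> nat \<Rightarrow> nat \<times> nat" where
  "unsh d x = (fst x - d, snd x - d)"

lemma unsh_sh[simp]: "unsh d (sh d x) = x" by (cases x) (simp add: unsh_def)

lemma sh_unsh: "d \<le> fst x \<Longrightarrow> d \<le> snd x \<Longrightarrow> sh d (unsh d x) = x"
  by (cases x) (simp add: unsh_def)

lemma split_bij:
  "bij_betw (\<lambda>(S1,T). S1 \<union> sh a ` T)
     ({S. sec_struct a S} \<times> {T. sec_struct m T \<and> (1,m)\<in>T})
     {S. sec_struct (a+m) S \<and> (a+1, a+m) \<in> S}"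
proof (rule bij_betw_byWitness[where f'="\<lambda>S. ({x\<in>S. snd x \<le> a}, unsh a ` {x\<in>S. a < fst x})"])
  show "\<forall>p\<in>{S. sec_struct a S} \<times> {T. sec_struct m T \<and> (1,m)\<in>T}.
     (\<lambda>S. ({x\<in>S. snd x \<le> a}, unsh a ` {x\<in>S. a < fst x})) ((\<lambda>(S1,T). S1 \<union> sh a ` T) p) = p"
  proof (rule ballI)
    fix p assume "p \<in> {S. sec_struct a S} \<times> {T. sec_struct m T \<and> (1,m)\<in>T}"
    then obtain S1 T where p: "p = (S1,T)" and s1: "sec_struct a S1" and t: "sec_struct m T" "(1,m)\<in>T" by auto
    have e1: "{x \<in> S1 \<union> sh a ` T. snd x \<le> a} = S1"
    proof -
      have "snd x \<le> a" if "x \<in> S1" for x using ssD[OF s1, of "fst x" "snd x"] that by simp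
      moreover have "\<not> snd x \<le> a" if "x \<in> sh a ` T" for x
        using that ssD[OF t(1)] by (fastforce simp: sh_def)
      ultimately show ?thesis by blast
    qed
    have e2: "{x \<in> S1 \<union> sh a ` T. a < fst x} = sh a ` T"
    proof -
      have "\<not> a < fst x" if "x \<in> S1" for x using ssD[OF s1, of "fst x" "snd x"] that by simp
      moreover have "a < fst x" if "x \<in> sh a ` T" for x
        using that ssD[OF t(1)] by (fastforce simp: sh_def)
      ultimately show ?thesis by blast
    qed
    show "(\<lambda>S. ({x\<in>S. snd x \<le> a}, unsh a ` {x\<in>S. a < fst x})) ((\<lambda>(S1,T). S1 \<union> sh a ` T) p) = p"
      unfolding p using e1 e2 by (simp add: image_image)
  qed
  show "\<forall>S\<in>{S. sec_struct (a+m) S \<and> (a+1, a+m) \<in> S}.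
      (\<lambda>(S1,T). S1 \<union> sh a ` T) ((\<lambda>S. ({x\<in>S. snd x \<le> a}, unsh a ` {x\<in>S. a < fst x})) S) = S"
  proof (rule ballI)
    fix S assume "S \<in> {S. sec_struct (a+m) S \<and> (a+1, a+m) \<in> S}"
    then have s: "sec_struct (a+m) S" and b: "(a+1, a+m) \<in> S" by auto
    have key: "snd x \<le> a \<or> a < fst x" if "x \<in> S" for x
    proof (rule ccontr)
      obtain k l where x: "x = (k,l)" by fastforce
      assume "\<not> (snd x \<le> a \<or> a < fst x)"
      then have kl: "k \<le> a" "a < l" using x by auto
      have "(k,l) \<noteq> (a+1,a+m)" using kl by auto
      then have "l \<noteq> a+1" "l \<noteq> a+m" using okD2[OF ss_ok[OF s] that[unfolded x] b] by auto
      moreover have "\<not> (k < a+1 \<and> a+1 < l \<and> l < a+m)" using okD3[OF ss_ok[OF s] that[unfolded x] b] .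
      moreover have "l \<le> a+m" using ssD[OF s that[unfolded x]] by simp
      ultimately show False using kl by linarith
    qed
    have "sh a ` unsh a ` {x\<in>S. a < fst x} = {x\<in>S. a < fst x}"
    proof -
      have "sh a (unsh a x) = x" if "x \<in> S" "a < fst x" for x
        using that ssD[OF s, of "fst x" "snd x"] by (intro sh_unsh) auto
      then show ?thesis by (force simp: image_image)
    qed
    then show "(\<lambda>(S1,T). S1 \<union> sh a ` T) ((\<lambda>S. ({x\<in>S. snd x \<le> a}, unsh a ` {x\<in>S. a < fst x})) S) = S" using key by (simp; blast)
  qed
  show "(\<lambda>(S1,T). S1 \<union> sh a ` T) ` ({S. sec_struct a S} \<times> {T. sec_struct m T \<and> (1,m)\<in>T})
      \<subseteq> {S. sec_struct (a+m) S \<and> (a+1, a+m) \<in> S}"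
  proof (rule image_subsetI)
    fix p assume "p \<in> {S. sec_struct a S} \<times> {T. sec_struct m T \<and> (1,m)\<in>T}"
    then obtain S1 T where p: "p = (S1,T)" and s1: "sec_struct a S1" and t: "sec_struct m T" "(1,m)\<in>T" by auto
    have "ok (S1 \<union> sh a ` T)"
    proof (rule ok_union)
      show "ok S1" using ss_ok[OF s1] .
      show "ok (sh a ` T)" using ss_ok[OF t(1)] ok_sh by blast
      show "\<forall>x\<in>S1. \<forall>y\<in>sh a ` T. snd x < fst y"
        using ssD[OF s1] ssD[OF t(1)] by fastforce
    qed
    moreover have "1 \<le> i \<and> j \<le> a + m" if "(i,j) \<in> S1 \<union> sh a ` T" for i j
      using that ssD[OF s1] ssD[OF t(1)] by fastforce
    ultimately have "sec_struct (a+m) (S1 \<union> sh a ` T)" by (rule ssI)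
    moreover have "(a+1, a+m) \<in> S1 \<union> sh a ` T"
      using t(2) by (metis UnI2 add.commute image_eqI sh_simp)
    ultimately show "(\<lambda>(S1,T). S1 \<union> sh a ` T) p \<in> {S. sec_struct (a+m) S \<and> (a+1, a+m) \<in> S}" using p by simp
  qed
  show "(\<lambda>S. ({x\<in>S. snd x \<le> a}, unsh a ` {x\<in>S. a < fst x})) ` {S. sec_struct (a+m) S \<and> (a+1, a+m) \<in> S}
      \<subseteq> {S. sec_struct a S} \<times> {T. sec_struct m T \<and> (1,m)\<in>T}"
  proof (rule image_subsetI)
    fix S assume "S \<in> {S. sec_struct (a+m) S \<and> (a+1, a+m) \<in> S}"
    then have s: "sec_struct (a+m) S" and b: "(a+1, a+m) \<in> S" by auto
    have "sec_struct a {x\<in>S. snd x \<le> a}"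
    proof (rule ssI)
      show "ok {x\<in>S. snd x \<le> a}" using ss_ok[OF s] by (rule ok_subset) blast
      show "1 \<le> i \<and> j \<le> a" if "(i,j) \<in> {x\<in>S. snd x \<le> a}" for i j using that ssD[OF s] by auto
    qed
    moreover have "sec_struct m (unsh a ` {x\<in>S. a < fst x})"
    proof (rule ssI)
      have "sh a ` unsh a ` {x\<in>S. a < fst x} = {x\<in>S. a < fst x}"
      proof -
        have "sh a (unsh a x) = x" if "x \<in> S" "a < fst x" for x
          using that ssD[OF s, of "fst x" "snd x"] by (intro sh_unsh) auto
        then show ?thesis by (force simp: image_image)
      qed
      moreover have "ok {x\<in>S. a < fst x}" using ss_ok[OF s] by (rule ok_subset) blast
      ultimately show "ok (unsh a ` {x\<in>S. a < fst x})" using ok_sh by metis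
      show "1 \<le> i \<and> j \<le> m" if "(i,j) \<in> unsh a ` {x\<in>S. a < fst x}" for i j
        using that ssD[OF s] by (fastforce simp: unsh_def)
    qed
    moreover have "(1,m) \<in> unsh a ` {x\<in>S. a < fst x}"
      using b by (force simp: unsh_def image_iff)
    ultimately show "({x\<in>S. snd x \<le> a}, unsh a ` {x\<in>S. a < fst x}) \<in> {S. sec_struct a S} \<times> {T. sec_struct m T \<and> (1,m)\<in>T}" by blast
  qed
qed




lemma outer_bij: assumes m: "1 \<le> m"
  shows "bij_betw (\<lambda>S. insert (1, m+2) (sh 1 ` S)) {S. sec_struct m S} {S. sec_struct (m+2) S \<and> (1, m+2) \<in> S}"
proof (rule bij_betw_byWitness[where f'="\<lambda>S. unsh 1 ` (S - {(1, m+2)})"])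
  show "\<forall>S\<in>{S. sec_struct m S}. unsh 1 ` (insert (1, m+2) (sh 1 ` S) - {(1, m+2)}) = S"
  proof (rule ballI)
    fix S assume "S \<in> {S. sec_struct m S}"
    then have s: "sec_struct m S" by simp
    have "(1, m+2) \<notin> sh 1 ` S" using ssD[OF s] by fastforce
    then have "insert (1, m+2) (sh 1 ` S) - {(1, m+2)} = sh 1 ` S" by blast
    then show "unsh 1 ` (insert (1, m+2) (sh 1 ` S) - {(1, m+2)}) = S" by (simp add: image_image)
  qed
  show "\<forall>S\<in>{S. sec_struct (m+2) S \<and> (1, m+2) \<in> S}. insert (1, m+2) (sh 1 ` unsh 1 ` (S - {(1, m+2)})) = S"
  proof (rule ballI)
    fix S assume "S \<in> {S. sec_struct (m+2) S \<and> (1, m+2) \<in> S}"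
    then have s: "sec_struct (m+2) S" and b: "(1, m+2) \<in> S" by auto
    have in2: "2 \<le> k \<and> l \<le> m + 1" if "(k,l) \<in> S - {(1,m+2)}" for k l
    proof -
      have "k \<noteq> 1 \<and> l \<noteq> m+2" using okD2[OF ss_ok[OF s], of k l 1 "m+2"] that b by auto
      then show ?thesis using ssD[OF s, of k l] that by auto
    qed
    have "sh 1 (unsh 1 x) = x" if "x \<in> S - {(1, m+2)}" for x
      using in2[of "fst x" "snd x"] ssD[OF s, of "fst x" "snd x"] that by (intro sh_unsh) auto
    then have "sh 1 ` unsh 1 ` (S - {(1, m+2)}) = S - {(1, m+2)}" by (force simp: image_image)
    then show "insert (1, m+2) (sh 1 ` unsh 1 ` (S - {(1, m+2)})) = S" using b by auto
  qed
  show "(\<lambda>S. insert (1, m+2) (sh 1 ` S)) ` {S. sec_struct m S} \<subseteq> {S. sec_struct (m+2) S \<and> (1, m+2) \<in> S}"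
  proof (rule image_subsetI)
    fix S assume "S \<in> {S. sec_struct m S}"
    then have s: "sec_struct m S" by simp
    have "ok (insert (1, m+2) (sh 1 ` S))"
    proof (rule ok_insert_outer)
      show "ok (sh 1 ` S)" using ss_ok[OF s] ok_sh by blast
      show "\<forall>(k,l)\<in>sh 1 ` S. 1 < k \<and> l < m+2" using ssD[OF s] by fastforce
    qed (use m in auto)
    moreover have "1 \<le> i \<and> j \<le> m+2" if "(i,j) \<in> insert (1, m+2) (sh 1 ` S)" for i j
      using that ssD[OF s] by fastforce
    ultimately have "sec_struct (m+2) (insert (1, m+2) (sh 1 ` S))" by (rule ssI)
    then show "insert (1, m+2) (sh 1 ` S) \<in> {S. sec_struct (m+2) S \<and> (1, m+2) \<in> S}" by simp
  qed
  show "(\<lambda>S. unsh 1 ` (S - {(1, m+2)})) ` {S. sec_struct (m+2) S \<and> (1, m+2) \<in> S} \<subseteq> {S. sec_struct m S}"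
  proof (rule image_subsetI)
    fix S assume "S \<in> {S. sec_struct (m+2) S \<and> (1, m+2) \<in> S}"
    then have s: "sec_struct (m+2) S" and b: "(1, m+2) \<in> S" by auto
    have in2: "2 \<le> k \<and> l \<le> m + 1" if "(k,l) \<in> S - {(1,m+2)}" for k l
    proof -
      have "k \<noteq> 1 \<and> l \<noteq> m+2" using okD2[OF ss_ok[OF s], of k l 1 "m+2"] that b by auto
      then show ?thesis using ssD[OF s, of k l] that by auto
    qed
    have "sh 1 (unsh 1 x) = x" if "x \<in> S - {(1, m+2)}" for x
      using in2[of "fst x" "snd x"] ssD[OF s, of "fst x" "snd x"] that by (intro sh_unsh) auto
    then have e: "sh 1 ` unsh 1 ` (S - {(1, m+2)}) = S - {(1, m+2)}" by (force simp: image_image)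
    have "sec_struct m (unsh 1 ` (S - {(1, m+2)}))"
    proof (rule ssI)
      have "ok (S - {(1, m+2)})" using ss_ok[OF s] by (rule ok_subset) blast
      then show "ok (unsh 1 ` (S - {(1, m+2)}))" using e ok_sh by metis
      show "1 \<le> i \<and> j \<le> m" if "(i,j) \<in> unsh 1 ` (S - {(1, m+2)})" for i j
        using that in2 by (fastforce simp: unsh_def)
    qed
    then show "unsh 1 ` (S - {(1, m+2)}) \<in> {S. sec_struct m S}" by simp
  qed
qed

lemma outer_weight: assumes s: "sec_struct m S"
  shows "ss_weight (insert (1, m+2) (sh 1 ` S)) = 6/16 * ec (card (top S)) * ss_weight S"
proof -
  let ?S = "sh 1 ` S"
  have fin: "finite ?S" using finite_ss[OF s] by simp
  have nin: "(1, m+2) \<notin> ?S" using ssD[OF s] by fastforce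
  have inner: "\<forall>(k,l)\<in>?S. 1 < k \<and> k < l \<and> l < m+2" using ssD[OF s] by fastforce
  have d: "directly_nested (insert (1, m+2) ?S) x = directly_nested ?S x" if "x \<in> ?S" for x
  proof (rule dn_local)
    have "1 < fst x" using that inner by auto
    then show "\<forall>(k,l)\<in>insert (1, m+2) ?S. fst x < k \<and> l < snd x \<longrightarrow> (k,l) \<in> ?S" by (auto intro!: rev_image_eqI)
  qed auto
  have "ss_weight (insert (1, m+2) ?S) = lw (insert (1, m+2) ?S) (1, m+2) * (\<Prod>x\<in>?S. lw (insert (1, m+2) ?S) x)"
    using fin nin by (simp add: weight_prod)
  also have "(\<Prod>x\<in>?S. lw (insert (1, m+2) ?S) x) = (\<Prod>x\<in>?S. lw ?S x)"
    by (rule prod.cong[OF refl]) (simp only: lw_def d)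
  also have "\<dots> = ss_weight S" using weight_prod[OF fin, symmetric] weight_sh[OF finite_ss[OF s]] by simp
  also have "lw (insert (1, m+2) ?S) (1, m+2) = 6/16 * ec (card (top S))"
    unfolding lw_def dn_outer[OF inner] top_sh
    by (simp add: card_image inj_on_subset[OF inj_sh subset_UNIV])
  finally show ?thesis .
qed

lemma top_outer: assumes t: "sec_struct m T" "(1,m) \<in> T" shows "top T = {(1,m)}"
proof -
  have "(1,m) \<in> top T" using t ssD[OF t(1)] unfolding top_def by fastforce
  moreover have "x \<notin> top T" if "x \<in> T" "x \<noteq> (1,m)" for x
  proof -
    obtain k l where x: "x = (k,l)" by fastforce
    have "k \<noteq> 1 \<and> l \<noteq> m" using okD2[OF ss_ok[OF t(1)], of k l 1 m] that x t(2) by auto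
    then have "1 < k \<and> l < m" using ssD[OF t(1), of k l] that x by auto
    then show ?thesis using t(2) x unfolding top_def by blast
  qed
  moreover have "top T \<subseteq> T" unfolding top_def by blast
  ultimately show ?thesis by blast
qed

lemma split_weight: assumes s1: "sec_struct a S1" and t: "sec_struct m T" "(1,m)\<in>T"
  shows "ss_weight (S1 \<union> sh a ` T) = ss_weight S1 * ss_weight T \<and> card (top (S1 \<union> sh a ` T)) = Suc (card (top S1))"
proof
  have oa: "ok S1" using ss_ok[OF s1] .
  have ob: "ok (sh a ` T)" using ss_ok[OF t(1)] ok_sh by blast
  have sep: "\<forall>x\<in>S1. \<forall>y\<in>sh a ` T. snd x < fst y" using ssD[OF s1] ssD[OF t(1)] by fastforce
  show "ss_weight (S1 \<union> sh a ` T) = ss_weight S1 * ss_weight T"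
    using weight_union[OF finite_ss[OF s1] _ oa ob sep] finite_ss[OF t(1)] weight_sh[OF finite_ss[OF t(1)]] by simp
  have "top (S1 \<union> sh a ` T) = top S1 \<union> {(1 + a, m + a)}"
    using top_union[OF oa ob sep] by (simp add: top_sh top_outer[OF t])
  moreover have "(1 + a, m + a) \<notin> top S1" using ssD[OF s1] unfolding top_def by fastforce
  moreover have "finite (top S1)" using finite_ss[OF s1] by (rule finite_subset[rotated]) (auto simp: top_def)
  ultimately show "card (top (S1 \<union> sh a ` T)) = Suc (card (top S1))" by simp
qed




definition hc :: "nat \<Rightarrow> (nat \<Rightarrow> bool) \<Rightarrow> real" where
  "hc n P = (\<Sum>S\<in>{S. sec_struct n S}. if P (card (top S)) then ss_weight S else 0)"

lemma fstar_small: "f0_star 0 = 0" "f0_star 1 = 0" "f0_star 2 = 0"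
proof -
  have e0: "{S. sec_struct 0 S \<and> (1, 0) \<in> S} = {}" using ssD by fastforce
  show "f0_star 0 = 0" unfolding f0_star_def e0 by simp
  have e1: "{S. sec_struct 1 S \<and> (1, 1) \<in> S} = {}" using ssD by fastforce
  show "f0_star 1 = 0" unfolding f0_star_def e1 by simp
  have e2: "{S. sec_struct 2 S \<and> (1, 2) \<in> S} = {}" using okD1[OF ss_ok] by fastforce
  show "f0_star 2 = 0" unfolding f0_star_def e2 by simp
qed

lemma fstar_rec: assumes m: "1 \<le> m"
  shows "f0_star (m+2) = 6/16 * (exp (1/2) * hc m (\<lambda>k. k = 0) + exp 1 * hc m (\<lambda>k. k = 1) + exp (-5) * hc m (\<lambda>k. 2 \<le> k))"
proof -
  have "f0_star (m+2) = (\<Sum>S\<in>{S. sec_struct (m+2) S \<and> (1, m+2) \<in> S}. ss_weight S)" by (simp add: f0_star_def)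
  also have "\<dots> = (\<Sum>S\<in>{S. sec_struct m S}. ss_weight (insert (1, m+2) (sh 1 ` S)))"
    by (rule sum.reindex_bij_betw[OF outer_bij[OF m], symmetric])
  also have "\<dots> = (\<Sum>S\<in>{S. sec_struct m S}. 6/16 * (exp (1/2) * (if card (top S) = 0 then ss_weight S else 0)
       + exp 1 * (if card (top S) = 1 then ss_weight S else 0) + exp (-5) * (if 2 \<le> card (top S) then ss_weight S else 0)))"
  proof (rule sum.cong[OF refl])
    fix S assume "S \<in> {S. sec_struct m S}"
    then have s: "sec_struct m S" by simp
    show "ss_weight (insert (1, m+2) (sh 1 ` S)) = 6/16 * (exp (1/2) * (if card (top S) = 0 then ss_weight S else 0)
       + exp 1 * (if card (top S) = 1 then ss_weight S else 0) + exp (-5) * (if 2 \<le> card (top S) then ss_weight S else 0))"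
      unfolding outer_weight[OF s] by (simp add: ec_def)
  qed
  also have "\<dots> = 6/16 * (exp (1/2) * hc m (\<lambda>k. k = 0) + exp 1 * hc m (\<lambda>k. k = 1) + exp (-5) * hc m (\<lambda>k. 2 \<le> k))"
    unfolding sum_distrib_left[symmetric] by (simp only: hc_def sum.distrib sum_distrib_left)
  finally show ?thesis .
qed

lemma hc0: "hc 0 P = (if P 0 then 1 else 0)"
proof -
  have "{S. sec_struct 0 S} = {{}}"
  proof (rule set_eqI, rule iffI)
    fix S assume "S \<in> {S. sec_struct 0 S}"
    then have "sec_struct 0 S" by simp
    then show "S \<in> {{}}" using ssD[of 0 S] by fastforce
  qed (simp add: sec_struct_def)
  then show ?thesis by (simp add: hc_def top_def ss_weight_def num_hairpin_def num_interior_def num_multi_def)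
qed

lemma hc_false: "hc n (\<lambda>k. False) = 0" by (simp add: hc_def)

lemma f0_hc: "f0 n = hc n (\<lambda>k. k = 0) + hc n (\<lambda>k. k = 1) + hc n (\<lambda>k. 2 \<le> k)"
proof -
  have "f0 n = (\<Sum>S\<in>{S. sec_struct n S}. (if card (top S) = 0 then ss_weight S else 0)
       + (if card (top S) = 1 then ss_weight S else 0) + (if 2 \<le> card (top S) then ss_weight S else 0))"
    unfolding f0_def by (rule sum.cong[OF refl]) auto
  then show ?thesis by (simp add: hc_def sum.distrib)
qed

lemma hc_rec: "hc (Suc n) P = hc n P + (\<Sum>a\<le>n. hc a (\<lambda>k. P (Suc k)) * f0_star (Suc n - a))"
proof -
  define C where "C a = {S. sec_struct (Suc n) S \<and> (a+1, Suc n) \<in> S}" for a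
  define g where "g S = (if P (card (top S)) then ss_weight S else 0)" for S
  have fin: "finite {S. sec_struct k S}" for k by (rule finite_SS)
  have finC: "finite (C a)" for a using fin[of "Suc n"] by (rule finite_subset[rotated]) (auto simp: C_def)
  have U: "{S. sec_struct (Suc n) S} = {S. sec_struct n S} \<union> (\<Union>a\<in>{..n}. C a)"
  proof (rule set_eqI, rule iffI)
    fix S assume "S \<in> {S. sec_struct (Suc n) S}"
    then have s: "sec_struct (Suc n) S" by simp
    show "S \<in> {S. sec_struct n S} \<union> (\<Union>a\<in>{..n}. C a)"
    proof (cases "\<exists>i. (i, Suc n) \<in> S")
      case True
      then obtain i where i: "(i, Suc n) \<in> S" by blast
      then have "1 \<le> i" "i < Suc n" using ssD[OF s i] by auto
      then have "S \<in> C (i - 1)" "i - 1 \<in> {..n}" using s i by (auto simp: C_def)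
      then show ?thesis by blast
    next
      case False
      have "sec_struct n S"
      proof (rule ssI)
        show "ok S" using ss_ok[OF s] .
        show "1 \<le> i \<and> j \<le> n" if "(i,j) \<in> S" for i j
          using ssD[OF s that] False that by (cases "j = Suc n") auto
      qed
      then show ?thesis by simp
    qed
  next
    fix S assume "S \<in> {S. sec_struct n S} \<union> (\<Union>a\<in>{..n}. C a)"
    then show "S \<in> {S. sec_struct (Suc n) S}"
    proof
      assume "S \<in> {S. sec_struct n S}"
      then have s: "sec_struct n S" by simp
      have "sec_struct (Suc n) S"
        by (rule ssI[OF ss_ok[OF s]]) (use ssD[OF s] in fastforce)
      then show ?thesis by simp
    qed (auto simp: C_def)
  qed
  have D1: "{S. sec_struct n S} \<inter> (\<Union>a\<in>{..n}. C a) = {}"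
  proof (rule ccontr)
    assume "\<not> ?thesis"
    then obtain S a where "sec_struct n S" "(a+1, Suc n) \<in> S" by (auto simp: C_def)
    then show False using ssD by fastforce
  qed
  have D2: "\<forall>a\<in>{..n}. \<forall>b\<in>{..n}. a \<noteq> b \<longrightarrow> C a \<inter> C b = {}"
  proof (intro ballI impI)
    fix a b :: nat assume "a \<noteq> b"
    show "C a \<inter> C b = {}"
    proof (rule ccontr)
      assume "C a \<inter> C b \<noteq> {}"
      then obtain S where S: "sec_struct (Suc n) S" "(a+1, Suc n) \<in> S" "(b+1, Suc n) \<in> S" by (auto simp: C_def)
      show False using okD2[OF ss_ok[OF S(1)] S(2) S(3)] \<open>a \<noteq> b\<close> by auto
    qed
  qed
  have CS: "(\<Sum>S\<in>C a. g S) = hc a (\<lambda>k. P (Suc k)) * f0_star (Suc n - a)" if a: "a \<le> n" for a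
  proof -
    define m where "m = Suc n - a"
    have am: "a + m = Suc n" using a by (simp add: m_def)
    have "C a = {S. sec_struct (a+m) S \<and> (a+1, a+m) \<in> S}" by (simp add: C_def am)
    then have "(\<Sum>S\<in>C a. g S) = (\<Sum>p\<in>{S. sec_struct a S} \<times> {T. sec_struct m T \<and> (1,m)\<in>T}. g ((\<lambda>(S1,T). S1 \<union> sh a ` T) p))"
      using sum.reindex_bij_betw[OF split_bij[of a m], of g] by simp
    also have "\<dots> = (\<Sum>p\<in>{S. sec_struct a S} \<times> {T. sec_struct m T \<and> (1,m)\<in>T}.
         (case p of (S1,T) \<Rightarrow> (if P (Suc (card (top S1))) then ss_weight S1 else 0) * ss_weight T))"
      proof (rule sum.cong[OF refl])
      fix p assume "p \<in> {S. sec_struct a S} \<times> {T. sec_struct m T \<and> (1,m)\<in>T}"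
      then obtain S1 T where p: "p = (S1,T)" and s1: "sec_struct a S1" and t: "sec_struct m T" "(1,m)\<in>T" by auto
      show "g ((\<lambda>(S1,T). S1 \<union> sh a ` T) p) = (case p of (S1,T) \<Rightarrow> (if P (Suc (card (top S1))) then ss_weight S1 else 0) * ss_weight T)"
        using split_weight[OF s1 t] by (simp add: p g_def)
    qed
    also have "\<dots> = (\<Sum>S1\<in>{S. sec_struct a S}. \<Sum>T\<in>{T. sec_struct m T \<and> (1,m)\<in>T}.
         (if P (Suc (card (top S1))) then ss_weight S1 else 0) * ss_weight T)"
      by (simp add: sum.cartesian_product)
    also have "\<dots> = hc a (\<lambda>k. P (Suc k)) * f0_star m"
      by (simp add: hc_def f0_star_def sum_product)
    finally show ?thesis by (simp add: m_def)
  qed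
  have "hc (Suc n) P = (\<Sum>S\<in>{S. sec_struct (Suc n) S}. g S)" by (simp add: hc_def g_def)
  also have "\<dots> = (\<Sum>S\<in>{S. sec_struct n S}. g S) + (\<Sum>S\<in>(\<Union>a\<in>{..n}. C a). g S)"
    unfolding U using D1 fin finC by (intro sum.union_disjoint) auto
  also have "(\<Sum>S\<in>(\<Union>a\<in>{..n}. C a). g S) = (\<Sum>a\<le>n. \<Sum>S\<in>C a. g S)"
    using D2 finC by (intro sum.UNION_disjoint) auto
  also have "\<dots> = (\<Sum>a\<le>n. hc a (\<lambda>k. P (Suc k)) * f0_star (Suc n - a))"
    by (rule sum.cong[OF refl]) (simp add: CS)
  finally show ?thesis by (simp add: hc_def g_def)
qed




lemma alg_main:
  fixes x q fs f h0 h1 h2 c1 c2 c3 i :: "'a::idom"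
  assumes q: "(1-x)*q = 1" and e0: "(1-x)*h0 = 1" and e1: "(1-x)*h1 = h0*fs" and ef: "(1-x)*f = 1 + f*fs"
    and f: "f = h0+h1+h2" and fs: "fs = x^2*(c1*(h0-1) + c2*h1 + c3*h2)" and i: "i*(1-fs*q) = 1"
  shows "fs = c1*x^2*(x*q) + c2*x^2*q^2*fs + c3*x^2*((fs*q)^2*i)*q \<and> f = q*i"
proof -
  have H0: "h0 = q" using q e0 by algebra
  have H1: "h1 = q^2*fs" using q e1 H0 by algebra
  have F: "f = q*i" using q ef i by algebra
  have H2: "h2 = (fs*q)^2*i*q" using f F H0 H1 i by algebra
  have X0: "q - 1 = x*q" using q by algebra
  have X: "h0 - 1 = x*q" using H0 X0 by simp
  show ?thesis using fs H2 H1 X F by (simp add: algebra_simps)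
qed

lemma alg_uniq:
  fixes g h q ig ih A B C :: "'a::idom"
  assumes "g = A + B*g + C*((g*q)^2*ig)*q" "ig*(1-g*q) = 1"
    "h = A + B*h + C*((h*q)^2*ih)*q" "ih*(1-h*q) = 1"
  shows "(g-h)*((1-(g+h)*q)*(1-B) + A*q - C*q^3*(g+h)) = 0"
  using assms by algebra


lemma rec_fps:
  fixes h g fs :: "nat \<Rightarrow> real"
  assumes r: "\<And>n. h (Suc n) = h n + (\<Sum>a\<le>n. g a * fs (Suc n - a))" and f0: "fs 0 = 0"
  shows "(1 - fps_X) * Abs_fps h = fps_const (h 0) + Abs_fps g * Abs_fps fs"
proof (rule fps_ext)
  fix n
  show "fps_nth ((1 - fps_X) * Abs_fps h) n = fps_nth (fps_const (h 0) + Abs_fps g * Abs_fps fs) n"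
  proof (cases n)
    case 0 then show ?thesis using f0 by (simp add: algebra_simps)
  next
    case (Suc k)
    have "fps_nth ((1 - fps_X) * Abs_fps h) n = h (Suc k) - h k" using Suc by (simp add: algebra_simps)
    moreover have "fps_nth (Abs_fps g * Abs_fps fs) (Suc k) = (\<Sum>i=0..Suc k. g i * fs (Suc k - i))" by (simp add: fps_mult_nth)
    moreover have "(\<Sum>i=0..Suc k. g i * fs (Suc k - i)) = (\<Sum>a\<le>k. g a * fs (Suc k - a))"
      using f0 by (simp add: atLeast0AtMost)
    ultimately show ?thesis using Suc r[of k] by simp
  qed
qed

lemma f0_true: "f0 n = hc n (\<lambda>k. True)" by (simp add: f0_def hc_def)

theorem lemma3:
  fixes Fs F :: "real fps"
  defines "Fs \<equiv> Abs_fps f0_star"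
    and "F \<equiv> Abs_fps f0"
  shows "Fs = fps_const (6/16 * exp (1/2)) * fps_X\<^sup>2 * (fps_X * inverse (1 - fps_X))
            + fps_const (6/16 * exp 1) * fps_X\<^sup>2 * (inverse (1 - fps_X))\<^sup>2 * Fs
            + fps_const (6/16 * exp (-5)) * fps_X\<^sup>2
                * ((Fs * inverse (1 - fps_X))\<^sup>2 * inverse (1 - Fs * inverse (1 - fps_X)))
                * inverse (1 - fps_X)
    \<and> (\<forall>G :: real fps. fps_nth G 0 = 0 \<longrightarrow>
           G = fps_const (6/16 * exp (1/2)) * fps_X\<^sup>2 * (fps_X * inverse (1 - fps_X))
            + fps_const (6/16 * exp 1) * fps_X\<^sup>2 * (inverse (1 - fps_X))\<^sup>2 * G
            + fps_const (6/16 * exp (-5)) * fps_X\<^sup>2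
                * ((G * inverse (1 - fps_X))\<^sup>2 * inverse (1 - G * inverse (1 - fps_X)))
                * inverse (1 - fps_X)
           \<longrightarrow> G = Fs)
    \<and> F = inverse (1 - fps_X) * inverse (1 - Fs * inverse (1 - fps_X))"
proof -
  define Q :: "real fps" where "Q = inverse (1 - fps_X)"
  define c1 where "c1 = fps_const (6/16 * exp (1/2) :: real)"
  define c2 where "c2 = fps_const (6/16 * exp 1 :: real)"
  define c3 where "c3 = fps_const (6/16 * exp (-5) :: real)"
  define H0 where "H0 = Abs_fps (\<lambda>n. hc n (\<lambda>k. k = 0))"
  define H1 where "H1 = Abs_fps (\<lambda>n. hc n (\<lambda>k. k = 1))"
  define H2 where "H2 = Abs_fps (\<lambda>n. hc n (\<lambda>k. 2 \<le> k))"
  have fs0: "f0_star 0 = 0" by (rule fstar_small)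
  have q: "(1 - fps_X) * Q = 1" unfolding Q_def by (rule inverse_mult_eq_1') simp
  have e0: "(1 - fps_X) * H0 = 1"
  proof -
    have "(1 - fps_X) * H0 = fps_const (hc 0 (\<lambda>k. k = 0)) + Abs_fps (\<lambda>_. 0) * Fs"
      unfolding H0_def Fs_def by (rule rec_fps) (simp_all add: hc_rec hc_false fs0)
    then show ?thesis by (simp add: hc0 fps_zero_def[symmetric])
  qed
  have e1: "(1 - fps_X) * H1 = H0 * Fs"
  proof -
    have "(1 - fps_X) * H1 = fps_const (hc 0 (\<lambda>k. k = 1)) + H0 * Fs"
      unfolding H1_def H0_def Fs_def by (rule rec_fps) (simp_all add: hc_rec fs0)
    then show ?thesis by (simp add: hc0)
  qed
  have ef: "(1 - fps_X) * F = 1 + F * Fs"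
  proof -
    have "(1 - fps_X) * F = fps_const (f0 0) + F * Fs"
      unfolding F_def Fs_def by (rule rec_fps) (simp_all add: f0_true hc_rec fs0)
    then show ?thesis by (simp add: f0_true hc0)
  qed
  have f: "F = H0 + H1 + H2" unfolding F_def H0_def H1_def H2_def by (rule fps_ext) (simp add: f0_hc)
  have fs: "Fs = fps_X^2 * (c1 * (H0 - 1) + c2 * H1 + c3 * H2)"
  proof (rule fps_ext)
    fix n
    show "fps_nth Fs n = fps_nth (fps_X^2 * (c1 * (H0 - 1) + c2 * H1 + c3 * H2)) n"
    proof (cases "n < 2")
      case True
      then have "n = 0 \<or> n = 1" by auto
      then show ?thesis using True fstar_small by (auto simp: Fs_def fps_X_power_mult_nth)
    next
      case False
      then obtain m where n: "n = m + 2" by (metis add.commute le_Suc_ex not_less)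
      have R: "fps_nth (fps_X^2 * (c1 * (H0 - 1) + c2 * H1 + c3 * H2)) n = fps_nth (c1 * (H0 - 1) + c2 * H1 + c3 * H2) m"
        by (simp add: n fps_X_power_mult_nth)
      show ?thesis
      proof (cases "m = 0")
        case True
        have "fps_nth Fs n = 0" using fstar_small(3) by (simp add: n True Fs_def numeral_2_eq_2)
        moreover have "fps_nth (c1 * (H0 - 1) + c2 * H1 + c3 * H2) m = 0"
          by (simp add: True H0_def H1_def H2_def hc0)
        ultimately show ?thesis using R by simp
      next
        case False
        then show ?thesis unfolding R using fstar_rec[of m]
          by (simp add: n Fs_def H0_def H1_def H2_def c1_def c2_def c3_def algebra_simps)
      qed
    qed
  qed
  have fsq0: "fps_nth (1 - Fs * Q) 0 \<noteq> 0" by (simp add: Fs_def fs0)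
  have i: "inverse (1 - Fs * Q) * (1 - Fs * Q) = 1" by (rule inverse_mult_eq_1[OF fsq0])
  note M = alg_main[OF q e0 e1 ef f fs i]
  have U: "G = Fs" if G0: "fps_nth G 0 = 0"
    and G: "G = c1 * fps_X\<^sup>2 * (fps_X * Q) + c2 * fps_X\<^sup>2 * Q\<^sup>2 * G
            + c3 * fps_X\<^sup>2 * ((G * Q)\<^sup>2 * inverse (1 - G * Q)) * Q" for G
  proof -
    have gq0: "fps_nth (1 - G * Q) 0 \<noteq> 0" by (simp add: G0)
    have ig: "inverse (1 - G * Q) * (1 - G * Q) = 1" by (rule inverse_mult_eq_1[OF gq0])
    have G': "G = c1 * fps_X\<^sup>2 * (fps_X * Q) + (c2 * fps_X\<^sup>2 * Q\<^sup>2) * G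
            + (c3 * fps_X\<^sup>2) * ((G * Q)\<^sup>2 * inverse (1 - G * Q)) * Q" using G by (simp add: mult.assoc)
    have F': "Fs = c1 * fps_X\<^sup>2 * (fps_X * Q) + (c2 * fps_X\<^sup>2 * Q\<^sup>2) * Fs
            + (c3 * fps_X\<^sup>2) * ((Fs * Q)\<^sup>2 * inverse (1 - Fs * Q)) * Q" using M by (simp add: mult.assoc)
    have Z: "(G - Fs) * ((1 - (G + Fs) * Q) * (1 - c2 * fps_X\<^sup>2 * Q\<^sup>2) + c1 * fps_X\<^sup>2 * (fps_X * Q) * Q
          - c3 * fps_X\<^sup>2 * Q^3 * (G + Fs)) = 0"
      by (rule alg_uniq[OF G' ig F' i])
    have "fps_nth ((1 - (G + Fs) * Q) * (1 - c2 * fps_X\<^sup>2 * Q\<^sup>2) + c1 * fps_X\<^sup>2 * (fps_X * Q) * Q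
          - c3 * fps_X\<^sup>2 * Q^3 * (G + Fs)) 0 = 1"
    proof -
      have Fs0: "fps_nth Fs 0 = 0" by (simp add: Fs_def fs0)
      have X2: "fps_nth (fps_X\<^sup>2::real fps) 0 = 0" by (simp add: power2_eq_square)
      show ?thesis by (simp add: G0 Fs0 X2)
    qed
    then have "(1 - (G + Fs) * Q) * (1 - c2 * fps_X\<^sup>2 * Q\<^sup>2) + c1 * fps_X\<^sup>2 * (fps_X * Q) * Q
          - c3 * fps_X\<^sup>2 * Q^3 * (G + Fs) \<noteq> 0" by (metis fps_zero_nth zero_neq_one)
    then show ?thesis using Z by (metis mult_eq_0_iff right_minus_eq)
  qed
  show ?thesis
    using M U unfolding Q_def c1_def c2_def c3_def by blast
qed


end
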